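(* Let $A$ be a partially ordered set that has a top element $\top$ and a bottom element $\bot$. Then every passable game over $A$ is equivalent to a monotone game over $A$.
   Context: Games over a poset $A$ are defined inductively: for each $a\in A$ there is an atomic game $[a]$ (often written $a$), which has no options; and if $L$ and $R$ are non-empty sets of games, then $\{L\mid R\}$ is a composite game with set of left options $L$ and set of right options $R$. The relations $\le$ and $\lhd$ on games over $A$ are defined by simultaneous recursion: $G\le H$ iff (1) every left option $G^L$ of $G$ satisfies $G^L\lhd H$, (2) every right option $H^R$ of $H$ satisfies $G\lhd H^R$, and (3) if $G$ or $H$ is atomic then $G\lhd H$; and $G\lhd H$ iff (1) some right option $G^R$ of $G$ satisfies $G^R\le H$, or (2) some left option $H^L$ of $H$ satisfies $G\le H^L$, or (3) $G=[a]$ and $H=[b]$ are both atomic and $a\le b$ in $A$. Games $G,H$ are equivalent, $G\equiv H$, if $G\le H$ and $H\le G$. A game $G$ is passable if $G\lhd G$ and (recursively) all its left and right options are passable. A left option $G^L$ of $G$ is good if $G\le G^L$; a right option $G^R$ is good if $G^R\le G$. A game is monotone if all of its left and right options are good and (recursively) all its options are monotone; atomic games are monotone. *)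

theory Defs
  imports Main
begin

text \<open>A composite game is represented as
  Comp L R f: its left options are the games f i with i in L, its right options
  the games f i with i in R. The index type 'i bounds the size of option sets;
  the theorem is stated for an arbitrary index type. The relations \<le>, \<lhd> are
  defined between games of possibly different index types (they only depend on the
  option sets), so that a witness may be represented with a larger index type.\<close>

datatype ('a, 'i) game = Atom 'a | Comp "'i set" "'i set" "'i \<Rightarrow> ('a, 'i) game"

fun lopts :: "('a, 'i) game \<Rightarrow> ('a, 'i) game set" where
  "lopts (Atom a) = {}"
| "lopts (Comp L R f) = f ` L"

fun ropts :: "('a, 'i) game \<Rightarrow> ('a, 'i) game set" where
  "ropts (Atom a) = {}"
| "ropts (Comp L R f) = f ` R"

fun is_atom :: "('a, 'i) game \<Rightarrow> bool" where
  "is_atom (Atom a) = True"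
| "is_atom (Comp L R f) = False"

primrec wf_game :: "('a, 'i) game \<Rightarrow> bool" where
  "wf_game (Atom a) = True"
| "wf_game (Comp L R f) = (L \<noteq> {} \<and> R \<noteq> {} \<and> (\<forall>i. i \<in> L \<union> R \<longrightarrow> wf_game (f i)))"

text \<open>The relations \<le> and \<lhd>, defined by simultaneous (well-founded) recursion;
  as an inductive definition (least fixed point, which coincides with the recursive one).\<close>
inductive game_le :: "('a::order, 'i) game \<Rightarrow> ('a, 'j) game \<Rightarrow> bool"
  and game_lf :: "('a::order, 'i) game \<Rightarrow> ('a, 'j) game \<Rightarrow> bool"
where
  le_intro: "(\<forall>GL. GL \<in> lopts G \<longrightarrow> game_lf GL H) \<Longrightarrow>
             (\<forall>HR. HR \<in> ropts H \<longrightarrow> game_lf G HR) \<Longrightarrow>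
             ((is_atom G \<or> is_atom H) \<longrightarrow> game_lf G H) \<Longrightarrow> game_le G H"
| lf_right: "GR \<in> ropts G \<Longrightarrow> game_le GR H \<Longrightarrow> game_lf G H"
| lf_left: "HL \<in> lopts H \<Longrightarrow> game_le G HL \<Longrightarrow> game_lf G H"
| lf_atom: "a \<le> b \<Longrightarrow> game_lf (Atom a) (Atom b)"

definition game_equiv :: "('a::order, 'i) game \<Rightarrow> ('a, 'j) game \<Rightarrow> bool" where
  "game_equiv G H \<longleftrightarrow> game_le G H \<and> game_le H G"

primrec passable :: "('a::order, 'i) game \<Rightarrow> bool" where
  "passable (Atom a) = game_lf (Atom a :: ('a, 'i) game) (Atom a :: ('a, 'i) game)"
| "passable (Comp L R f) = (game_lf (Comp L R f :: ('a, 'i) game) (Comp L R f :: ('a, 'i) game) \<and>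
      (\<forall>i. i \<in> L \<union> R \<longrightarrow> passable (f i)))"

primrec monotone_game :: "('a::order, 'i) game \<Rightarrow> bool" where
  "monotone_game (Atom a) = True"
| "monotone_game (Comp L R f) =
     ((\<forall>i. i \<in> L \<longrightarrow> game_le (Comp L R f) (f i)) \<and>
      (\<forall>i. i \<in> R \<longrightarrow> game_le (f i) (Comp L R f)) \<and>
      (\<forall>i. i \<in> L \<union> R \<longrightarrow> monotone_game (f i)))"

end

theory Submission imports Defs begin

lemma le_iff: "game_le G H \<longleftrightarrow> (\<forall>GL\<in>lopts G. game_lf GL H) \<and> (\<forall>HR\<in>ropts H. game_lf G HR) \<and> ((is_atom G \<or> is_atom H) \<longrightarrow> game_lf G H)"
  by (subst game_le.simps) auto

lemma lf_iff: "game_lf G H \<longleftrightarrow> (\<exists>GR\<in>ropts G. game_le GR H) \<or> (\<exists>HL\<in>lopts H. game_le G HL) \<or> (\<exists>a b. G = Atom a \<and> H = Atom b \<and> a \<le> b)"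
  by (subst game_lf.simps) auto

lemma game_induct: assumes "\<And>G. (\<And>G'. G' \<in> lopts G \<union> ropts G \<Longrightarrow> P G') \<Longrightarrow> P G" shows "P G"
proof (induction G)
  case (Atom a) then show ?case using assms[of "Atom a"] by simp
next
  case (Comp L R f) then show ?case using assms[of "Comp L R f"] by auto
qed

lemma is_atom_iff: "is_atom G \<longleftrightarrow> (\<exists>a. G = Atom a)" by (cases G) auto
lemma atom_opts: "is_atom G \<Longrightarrow> lopts G = {} \<and> ropts G = {}" by (cases G) auto

lemma wf_opts: "wf_game G \<Longrightarrow> G' \<in> lopts G \<union> ropts G \<Longrightarrow> wf_game G'"
  by (cases G) auto
lemma wf_ne: "wf_game G \<Longrightarrow> \<not> is_atom G \<Longrightarrow> lopts G \<noteq> {} \<and> ropts G \<noteq> {}"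
  by (cases G) auto

lemma le_refl: "game_le G G"
proof (induction G rule: game_induct)
  case (1 G)
  show ?case unfolding le_iff
  proof (intro conjI ballI impI)
    fix GL assume "GL \<in> lopts G" then show "game_lf GL G" using 1 by (auto intro: lf_left)
  next
    fix GR assume "GR \<in> ropts G" then show "game_lf G GR" using 1 by (auto intro: lf_right)
  next
    assume "is_atom G \<or> is_atom G" then show "game_lf G G" by (auto simp: is_atom_iff intro: lf_atom)
  qed
qed

lemma le_atom: "game_le (Atom a :: ('a::order,'i) game) (Atom a :: ('a,'j) game)"
  by (auto simp: le_iff intro: lf_atom)

lemma top_le: "wf_game (X :: ('a::order_top,'i) game) \<Longrightarrow> game_le X (Atom top :: ('a,'j) game) \<and> game_lf X (Atom top :: ('a,'j) game)"
proof (induction X rule: game_induct)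
  case (1 G)
  have lf: "game_lf G (Atom top :: ('a,'j) game)"
  proof (cases "is_atom G")
    case True then show ?thesis by (auto simp: is_atom_iff intro: lf_atom)
  next
    case False
    then obtain GR where "GR \<in> ropts G" using wf_ne[OF 1(2)] by auto
    then show ?thesis using 1 wf_opts[OF 1(2)] by (auto intro: lf_right)
  qed
  have "game_le G (Atom top :: ('a,'j) game)"
    unfolding le_iff using lf 1 wf_opts[OF 1(2)] by auto
  with lf show ?case by simp
qed

lemma bot_le: "wf_game (X :: ('a::order_bot,'i) game) \<Longrightarrow> game_le (Atom bot :: ('a,'j) game) X \<and> game_lf (Atom bot :: ('a,'j) game) X"
proof (induction X rule: game_induct)
  case (1 G)
  have lf: "game_lf (Atom bot :: ('a,'j) game) G"
  proof (cases "is_atom G")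
    case True then show ?thesis by (auto simp: is_atom_iff intro: lf_atom)
  next
    case False
    then obtain GL where "GL \<in> lopts G" using wf_ne[OF 1(2)] by auto
    then show ?thesis using 1 wf_opts[OF 1(2)] by (auto intro: lf_left)
  qed
  have "game_le (Atom bot :: ('a,'j) game) G"
    unfolding le_iff using lf 1 wf_opts[OF 1(2)] by auto
  with lf show ?case by simp
qed

lemma top_le1: "wf_game (X :: ('a::order_top,'i) game) \<Longrightarrow> game_le X (Atom top :: ('a,'j) game)"
  using top_le by blast
lemma bot_le1: "wf_game (X :: ('a::order_bot,'i) game) \<Longrightarrow> game_le (Atom bot :: ('a,'j) game) X"
  using bot_le by blast

definition TP :: "('a::order,'i) game \<Rightarrow> ('a,'j) game \<Rightarrow> ('a,'k) game \<Rightarrow> bool" where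
  "TP G H K \<longleftrightarrow> (game_le G H \<longrightarrow> game_le H K \<longrightarrow> game_le G K) \<and>
     (game_lf G H \<longrightarrow> game_le H K \<longrightarrow> game_lf G K) \<and>
     (game_le G H \<longrightarrow> game_lf H K \<longrightarrow> game_lf G K)"

lemma TP_step:
  fixes G :: "('a::order,'i) game" and H :: "('a,'j) game" and K :: "('a,'k) game"
  assumes IG: "\<And>G' (H::('a,'j) game) (K::('a,'k) game). G' \<in> lopts G \<union> ropts G \<Longrightarrow> TP G' H K"
  and IH: "\<And>H' (K::('a,'k) game). H' \<in> lopts H \<union> ropts H \<Longrightarrow> TP G H' K"
  and IK: "\<And>K'. K' \<in> lopts K \<union> ropts K \<Longrightarrow> TP G H K'"
  shows "TP G H K"
proof -
  have A2: "game_lf G K" if a: "game_lf G H" and b: "game_le H K"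
  proof -
    from a consider (r) GR where "GR \<in> ropts G" "game_le GR H" | (l) HL where "HL \<in> lopts H" "game_le G HL"
      | (at) x y where "G = Atom x" "H = Atom y" "x \<le> y" unfolding lf_iff by blast
    then show ?thesis
    proof cases
      case r
      with IG[of GR H K] b have "game_le GR K" by (auto simp: TP_def)
      with r show ?thesis by (auto intro: lf_right)
    next
      case l
      from b l have "game_lf HL K" unfolding le_iff by blast
      with IH[of HL K] l show ?thesis by (auto simp: TP_def)
    next
      case at
      from b at have "game_lf H K" unfolding le_iff by simp
      then consider (l2) KL where "KL \<in> lopts K" "game_le H KL" | (at2) z where "K = Atom z" "y \<le> z"
        using at unfolding lf_iff by auto
      then show ?thesis
      proof cases
        case l2
        have "game_le G H" using at by (auto simp: le_iff intro: lf_atom)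
        with IK[of KL] l2 have "game_le G KL" by (auto simp: TP_def)
        with l2 show ?thesis by (auto intro: lf_left)
      next
        case at2 with at show ?thesis by (auto intro: lf_atom)
      qed
    qed
  qed
  have A3: "game_lf G K" if a: "game_le G H" and b: "game_lf H K"
  proof -
    from b consider (r) HR where "HR \<in> ropts H" "game_le HR K" | (l) KL where "KL \<in> lopts K" "game_le H KL"
      | (at) x y where "H = Atom x" "K = Atom y" "x \<le> y" unfolding lf_iff by blast
    then show ?thesis
    proof cases
      case r
      from a r have "game_lf G HR" unfolding le_iff by blast
      with IH[of HR K] r show ?thesis by (auto simp: TP_def)
    next
      case l
      with IK[of KL] a have "game_le G KL" by (auto simp: TP_def)
      with l show ?thesis by (auto intro: lf_left)
    next
      case at
      from a at have "game_lf G H" unfolding le_iff by simp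
      then consider (r2) GR where "GR \<in> ropts G" "game_le GR H" | (at2) z where "G = Atom z" "z \<le> x"
        using at unfolding lf_iff by auto
      then show ?thesis
      proof cases
        case r2
        have "game_le H K" using at by (auto simp: le_iff intro: lf_atom)
        with IG[of GR H K] r2 have "game_le GR K" by (auto simp: TP_def)
        with r2 show ?thesis by (auto intro: lf_right)
      next
        case at2 with at show ?thesis by (auto intro: lf_atom)
      qed
    qed
  qed
  have A1: "game_le G K" if a: "game_le G H" and b: "game_le H K"
    unfolding le_iff
  proof (intro conjI ballI impI)
    fix GL assume "GL \<in> lopts G"
    with a have "game_lf GL H" unfolding le_iff by blast
    with IG[of GL H K] b \<open>GL \<in> lopts G\<close> show "game_lf GL K" by (auto simp: TP_def)
  next
    fix KR assume "KR \<in> ropts K"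
    with b have "game_lf H KR" unfolding le_iff by blast
    with IK[of KR] a \<open>KR \<in> ropts K\<close> show "game_lf G KR" by (auto simp: TP_def)
  next
    assume "is_atom G \<or> is_atom K"
    then show "game_lf G K"
    proof
      assume "is_atom G"
      with a have "game_lf G H" unfolding le_iff by blast
      with A2 b show ?thesis by blast
    next
      assume "is_atom K"
      with b have "game_lf H K" unfolding le_iff by blast
      with A3 a show ?thesis by blast
    qed
  qed
  show ?thesis unfolding TP_def using A1 A2 A3 by blast
qed

lemma TP_all: "TP (G::('a::order,'i) game) (H::('a,'j) game) (K::('a,'k) game)"
proof -
  have "\<forall>(H::('a,'j) game) (K::('a,'k) game). TP G H K"
  proof (induction G rule: game_induct)
    case (1 G)
    note IGx = 1
    have "\<forall>(K::('a,'k) game). TP G H K" for H :: "('a,'j) game"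
    proof (induction H rule: game_induct)
      case (1 H)
      note IHx = 1
      have "TP G H K" for K :: "('a,'k) game"
      proof (induction K rule: game_induct)
        case (1 K)
        show ?case by (rule TP_step) (use IGx IHx 1 in blast)+
      qed
      then show ?case by blast
    qed
    then show ?case by blast
  qed
  then show ?thesis by blast
qed


lemma le_trans': "game_le G H \<Longrightarrow> game_le H K \<Longrightarrow> game_le G K"
  using TP_all[of G H K] unfolding TP_def by blast
lemma lf_le_trans: "game_lf G H \<Longrightarrow> game_le H K \<Longrightarrow> game_lf G K"
  using TP_all[of G H K] unfolding TP_def by blast
lemma le_lf_trans: "game_le G H \<Longrightarrow> game_lf H K \<Longrightarrow> game_lf G K"
  using TP_all[of G H K] unfolding TP_def by blast

lemma le_lf_opt: "game_le G H \<Longrightarrow> GL \<in> lopts G \<Longrightarrow> game_lf GL H"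
  unfolding le_iff by blast
lemma le_lf_ropt: "game_le G H \<Longrightarrow> HR \<in> ropts H \<Longrightarrow> game_lf G HR"
  unfolding le_iff by blast
lemma le_atom_lf: "game_le G H \<Longrightarrow> is_atom G \<or> is_atom H \<Longrightarrow> game_lf G H"
  unfolding le_iff by blast

lemma mono_intro: "(\<forall>Y\<in>lopts X. game_le X Y \<and> monotone_game Y) \<Longrightarrow> (\<forall>Y\<in>ropts X. game_le Y X \<and> monotone_game Y) \<Longrightarrow> monotone_game X"
  by (cases X) auto
lemma wf_intro: "\<not> is_atom X \<Longrightarrow> lopts X \<noteq> {} \<Longrightarrow> ropts X \<noteq> {} \<Longrightarrow> (\<forall>Y\<in>lopts X \<union> ropts X. wf_game Y) \<Longrightarrow> wf_game X"
  by (cases X) auto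
lemma passable_lf: "passable X \<Longrightarrow> game_lf X X"
  by (cases X) auto
lemma passable_opts: "passable X \<Longrightarrow> Y \<in> lopts X \<union> ropts X \<Longrightarrow> passable Y"
  by (cases X) auto

definition t0 :: "('a,'i) game set" where "t0 = {}"
definition t1 :: "('a,'i) game set" where "t1 = {Atom undefined}"
definition t2 :: "('a,'i) game set" where "t2 = {Comp {} {} (\<lambda>_. Atom undefined)}"
definition t3 :: "('a,'i) game set" where "t3 = {Atom undefined, Comp {} {} (\<lambda>_. Atom undefined)}"
definition enc :: "'i \<Rightarrow> ('a,'i) game set" where "enc i = {Comp {i} {} (\<lambda>_. Atom undefined)}"

lemma tags_distinct: "t0 \<noteq> t1" "t0 \<noteq> t2" "t0 \<noteq> t3" "t1 \<noteq> t2" "t1 \<noteq> t3" "t2 \<noteq> t3"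
  "t0 \<notin> range enc" "t1 \<notin> range enc"
  unfolding t0_def t1_def t2_def t3_def enc_def by (auto simp: doubleton_eq_iff)

lemma inj_enc: "inj enc"
  unfolding enc_def by (auto intro: injI)

type_synonym ('a,'i) jgame = "('a, ('a,'i) game set) game"

definition pair :: "('a,'i) jgame \<Rightarrow> ('a,'i) jgame \<Rightarrow> ('a,'i) jgame" where
  "pair x y = Comp {t0} {t1} (\<lambda>j. if j = t0 then x else y)"
definition quad :: "('a,'i) jgame \<Rightarrow> ('a,'i) jgame \<Rightarrow> ('a,'i) jgame \<Rightarrow> ('a,'i) jgame \<Rightarrow> ('a,'i) jgame" where
  "quad a b c d = Comp {t0,t1} {t2,t3} (\<lambda>j. if j = t0 then a else if j = t1 then b else if j = t2 then c else d)"
definition mkL :: "('a,'i) jgame \<Rightarrow> ('i \<Rightarrow> ('a,'i) jgame) \<Rightarrow> 'i set \<Rightarrow> ('a,'i) jgame \<Rightarrow> ('a,'i) jgame" where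
  "mkL x P I y = Comp (insert t0 (enc ` I)) {t1} (\<lambda>j. if j = t0 then x else if j = t1 then y else P (inv enc j))"
definition mkR :: "('a,'i) jgame \<Rightarrow> ('a,'i) jgame \<Rightarrow> ('i \<Rightarrow> ('a,'i) jgame) \<Rightarrow> 'i set \<Rightarrow> ('a,'i) jgame" where
  "mkR x y P I = Comp {t0} (insert t1 (enc ` I)) (\<lambda>j. if j = t0 then x else if j = t1 then y else P (inv enc j))"

lemma wf_comp_iff: "wf_game X \<longleftrightarrow> is_atom X \<or> (lopts X \<noteq> {} \<and> ropts X \<noteq> {} \<and> (\<forall>Y\<in>lopts X \<union> ropts X. wf_game Y))"
  by (cases X) auto

lemma pair_lr: "lopts (pair x y) = {x}" "ropts (pair x y) = {y}" "\<not> is_atom (pair x y)"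
proof -
  have e: "t1 \<noteq> t0" using tags_distinct by auto
  show "lopts (pair x y) = {x}" unfolding pair_def lopts.simps image_insert image_empty by simp
  show "ropts (pair x y) = {y}" unfolding pair_def ropts.simps image_insert image_empty by (simp only: e if_False)
  show "\<not> is_atom (pair x y)" unfolding pair_def by simp
qed

lemma pair_wf: "wf_game (pair x y) \<longleftrightarrow> wf_game x \<and> wf_game y"
  apply (subst wf_comp_iff)
  apply (simp only: pair_lr simp_thms)
  by blast
lemmas pair_simps[simp] = pair_lr pair_wf

lemma quad_lr: "lopts (quad a b c d) = {a,b}" "ropts (quad a b c d) = {c,d}" "\<not> is_atom (quad a b c d)"
proof -
  have e: "t1 \<noteq> t0" "t2 \<noteq> t0" "t3 \<noteq> t0" "t2 \<noteq> t1" "t3 \<noteq> t1" "t3 \<noteq> t2" using tags_distinct by auto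
  show "lopts (quad a b c d) = {a,b}" unfolding quad_def lopts.simps image_insert image_empty by (simp only: e if_False if_True simp_thms)
  show "ropts (quad a b c d) = {c,d}" unfolding quad_def ropts.simps image_insert image_empty by (simp only: e if_False if_True simp_thms)
  show "\<not> is_atom (quad a b c d)" unfolding quad_def by simp
qed

lemma quad_wf: "wf_game (quad a b c d) \<longleftrightarrow> wf_game a \<and> wf_game b \<and> wf_game c \<and> wf_game d"
  apply (subst wf_comp_iff)
  apply (simp only: quad_lr simp_thms)
  by blast
lemmas quad_simps[simp] = quad_lr quad_wf

lemma img_aux: "(\<lambda>j. if j = t0 then x else if j = t1 then y else P (inv enc j)) ` enc ` I = P ` I"
proof -
  have e: "\<And>i. enc i \<noteq> t0" "\<And>i. enc i \<noteq> t1" using tags_distinct by auto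
  show ?thesis unfolding image_image
    by (rule image_cong) (simp_all add: e inv_f_f[OF inj_enc])
qed

lemma mkL_simps[simp]: "lopts (mkL x P I y) = insert x (P ` I)" "ropts (mkL x P I y) = {y}" "\<not> is_atom (mkL x P I y)"
  "wf_game (mkL x P I y) \<longleftrightarrow> wf_game x \<and> wf_game y \<and> (\<forall>i\<in>I. wf_game (P i))"
proof -
  have e: "\<And>i. enc i \<noteq> t0" "\<And>i. enc i \<noteq> t1" "t1 \<noteq> t0" using tags_distinct by auto
  show l: "lopts (mkL x P I y) = insert x (P ` I)"
    unfolding mkL_def lopts.simps image_insert img_aux by simp
  show r: "ropts (mkL x P I y) = {y}"
    unfolding mkL_def ropts.simps image_insert image_empty using e by (simp add: e(3) e(3)[symmetric])
  show "\<not> is_atom (mkL x P I y)" unfolding mkL_def by simp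
  have "wf_game (mkL x P I y) \<longleftrightarrow> (\<forall>Y\<in>lopts (mkL x P I y) \<union> ropts (mkL x P I y). wf_game Y)"
    unfolding mkL_def wf_game.simps lopts.simps ropts.simps by blast
  then show "wf_game (mkL x P I y) \<longleftrightarrow> wf_game x \<and> wf_game y \<and> (\<forall>i\<in>I. wf_game (P i))"
    unfolding l r by blast
qed

lemma mkR_simps[simp]: "lopts (mkR x y P I) = {x}" "ropts (mkR x y P I) = insert y (P ` I)" "\<not> is_atom (mkR x y P I)"
  "wf_game (mkR x y P I) \<longleftrightarrow> wf_game x \<and> wf_game y \<and> (\<forall>i\<in>I. wf_game (P i))"
proof -
  have e: "\<And>i. enc i \<noteq> t0" "\<And>i. enc i \<noteq> t1" "t1 \<noteq> t0" using tags_distinct by auto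
  show l: "ropts (mkR x y P I) = insert y (P ` I)"
    unfolding mkR_def ropts.simps image_insert img_aux using e by (simp add: e(3) e(3)[symmetric])
  show r: "lopts (mkR x y P I) = {x}"
    unfolding mkR_def lopts.simps image_insert image_empty using e by (simp add: e(3) e(3)[symmetric])
  show "\<not> is_atom (mkR x y P I)" unfolding mkR_def by simp
  have "wf_game (mkR x y P I) \<longleftrightarrow> (\<forall>Y\<in>lopts (mkR x y P I) \<union> ropts (mkR x y P I). wf_game Y)"
    unfolding mkR_def wf_game.simps lopts.simps ropts.simps by blast
  then show "wf_game (mkR x y P I) \<longleftrightarrow> wf_game x \<and> wf_game y \<and> (\<forall>i\<in>I. wf_game (P i))"
    unfolding l r by blast
qed


definition Up :: "('a::{order_bot,order_top},'i) jgame \<Rightarrow> ('a,'i) jgame" where "Up K = pair (Atom top) K"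
definition Down :: "('a::{order_bot,order_top},'i) jgame \<Rightarrow> ('a,'i) jgame" where "Down K = pair K (Atom bot)"

lemma Up_simps[simp]: "lopts (Up K) = {Atom top}" "ropts (Up K) = {K}" "\<not> is_atom (Up K)" "wf_game (Up K) = wf_game K"
  unfolding Up_def by simp_all
lemma Down_simps[simp]: "lopts (Down K) = {K}" "ropts (Down K) = {Atom bot}" "\<not> is_atom (Down K)" "wf_game (Down K) = wf_game K"
  unfolding Down_def by simp_all

lemma upI: "wf_game X \<Longrightarrow> game_lf X K \<Longrightarrow> game_le X (Up K)"
  unfolding le_iff
proof (intro conjI ballI impI)
  assume w: "wf_game X"
  fix GL assume "GL \<in> lopts X"
  then have "wf_game GL" using wf_opts[OF w] by blast
  then show "game_lf GL (Up K)" by (intro lf_left[of "Atom top"]) (simp_all add: top_le)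
next
  fix HR assume "game_lf X K" "HR \<in> ropts (Up K)" then show "game_lf X HR" by simp
next
  assume w: "wf_game X"
  show "game_lf X (Up K)" by (intro lf_left[of "Atom top"]) (simp_all add: top_le w)
qed
lemma upD: "game_le X (Up K) \<Longrightarrow> game_lf X K"
  unfolding le_iff by simp
lemma up_lf: "game_le K Y \<Longrightarrow> game_lf (Up K) Y"
  by (rule lf_right[of K]) simp_all
lemma downI: "wf_game Y \<Longrightarrow> game_lf K Y \<Longrightarrow> game_le (Down K) Y"
  unfolding le_iff
proof (intro conjI ballI impI)
  assume w: "wf_game Y"
  fix HR assume "HR \<in> ropts Y"
  then have "wf_game HR" using wf_opts[OF w] by blast
  then show "game_lf (Down K) HR" by (intro lf_right[of "Atom bot"]) (simp_all add: bot_le)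
next
  fix GL assume "game_lf K Y" "GL \<in> lopts (Down K)" then show "game_lf GL Y" by simp
next
  assume w: "wf_game Y"
  show "game_lf (Down K) Y" by (intro lf_right[of "Atom bot"]) (simp_all add: bot_le w)
qed
lemma down_lf: "game_le Y K \<Longrightarrow> game_lf Y (Down K)"
  by (rule lf_left[of K]) simp_all

lemma mono_up: "wf_game K \<Longrightarrow> monotone_game K \<Longrightarrow> game_lf K K \<Longrightarrow> monotone_game (Up K)"
  by (rule mono_intro) (auto intro: upI top_le1)
lemma mono_down: "wf_game K \<Longrightarrow> monotone_game K \<Longrightarrow> game_lf K K \<Longrightarrow> monotone_game (Down K)"
  by (rule mono_intro) (auto intro: downI bot_le1)

lemma lf_top_opt: "wf_game (X::('a::{order_bot,order_top},'k) game) \<Longrightarrow> Atom top \<in> lopts Y \<Longrightarrow> game_lf X Y"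
  by (rule lf_left[of "Atom top"]) (auto intro: top_le1)
lemma lf_bot_opt: "wf_game (Y::('a::{order_bot,order_top},'k) game) \<Longrightarrow> Atom bot \<in> ropts X \<Longrightarrow> game_lf X Y"
  by (rule lf_right[of "Atom bot"]) (auto intro: bot_le1)

lemma up_self: "wf_game K \<Longrightarrow> game_lf (Up K) (Up K)"
  by (rule lf_top_opt) simp_all
lemma down_self: "wf_game K \<Longrightarrow> game_lf (Down K) (Down K)"
  by (rule lf_bot_opt) simp_all


lemma build:
  fixes G :: "('a::{order_bot,order_top},'i) game" and S T :: "('a,'i) jgame"
  assumes wfG: "wf_game G" and naG: "\<not> is_atom G"
  and wfS: "wf_game S" and mS: "monotone_game S" and SG: "game_le S G" and GS: "game_lf G S"
  and flS: "\<forall>GL\<in>lopts G. game_lf GL S"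
  and wfT: "wf_game T" and mT: "monotone_game T" and GT: "game_le G T" and TG: "game_lf T G"
  and Tfr: "\<forall>GR\<in>ropts G. game_lf T GR"
  shows "\<exists>H :: ('a,'i) jgame. wf_game H \<and> monotone_game H \<and> game_equiv G H"
proof -
  define H where "H = pair (Up S) (Down T)"
  have wfH: "wf_game H" unfolding H_def using wfS wfT by simp
  have HG: "game_le H G" unfolding le_iff
  proof (intro conjI ballI impI)
    fix HL assume "HL \<in> lopts H" then show "game_lf HL G" unfolding H_def using up_lf[OF SG] by simp
  next
    fix GR assume a: "GR \<in> ropts G"
    show "game_lf H GR" unfolding H_def
      by (rule lf_right[of "Down T"]) (use a Tfr wf_opts[OF wfG] in \<open>auto intro!: downI\<close>)
  next
    assume "is_atom H \<or> is_atom G" then show "game_lf H G" using naG unfolding H_def by simp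
  qed
  have GH: "game_le G H" unfolding le_iff
  proof (intro conjI ballI impI)
    fix GL assume a: "GL \<in> lopts G" show "game_lf GL H" unfolding H_def
      by (rule lf_left[of "Up S"]) (use a flS wf_opts[OF wfG] in \<open>auto intro!: upI\<close>)
  next
    fix HR assume "HR \<in> ropts H" then show "game_lf G HR" unfolding H_def using down_lf[OF GT] by simp
  next
    assume "is_atom G \<or> is_atom H" then show "game_lf G H" using naG unfolding H_def by simp
  qed
  have mH: "monotone_game H" unfolding H_def
  proof (rule mono_intro; intro ballI)
    fix Y assume "Y \<in> lopts (pair (Up S) (Down T))"
    then have Y: "Y = Up S" by simp
    have "game_le (pair (Up S) (Down T)) (Up S)"
      by (rule upI) (use wfH le_lf_trans[OF HG GS] in \<open>simp_all add: H_def\<close>)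
    moreover have "monotone_game (Up S)" by (rule mono_up[OF wfS mS le_lf_trans[OF SG GS]])
    ultimately show "game_le (pair (Up S) (Down T)) Y \<and> monotone_game Y" using Y by simp
  next
    fix Y assume "Y \<in> ropts (pair (Up S) (Down T))"
    then have Y: "Y = Down T" by simp
    have "game_le (Down T) (pair (Up S) (Down T))"
      by (rule downI) (use wfH lf_le_trans[OF TG GH] in \<open>simp_all add: H_def\<close>)
    moreover have "monotone_game (Down T)" by (rule mono_down[OF wfT mT lf_le_trans[OF TG GT]])
    ultimately show "game_le Y (pair (Up S) (Down T)) \<and> monotone_game Y" using Y by simp
  qed
  show ?thesis using wfH mH GH HG unfolding game_equiv_def by blast
qed


definition goodST :: "('a::{order_bot,order_top},'i) game \<Rightarrow> ('a,'i) jgame \<Rightarrow> ('a,'i) jgame \<Rightarrow> bool" where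
  "goodST G S T \<longleftrightarrow> wf_game S \<and> monotone_game S \<and> game_le S G \<and> game_lf G S \<and> (\<forall>GL\<in>lopts G. game_lf GL S) \<and>
     wf_game T \<and> monotone_game T \<and> game_le G T \<and> game_lf T G \<and> (\<forall>GR\<in>ropts G. game_lf T GR)"

lemma caseA:
  fixes f :: "'i \<Rightarrow> ('a::{order_bot,order_top},'i) game" and F :: "'i \<Rightarrow> ('a,'i) jgame"
  assumes Gdef: "G = Comp L R f" and wfG: "wf_game G"
  and hF: "\<And>i. i \<in> L \<union> R \<Longrightarrow> wf_game (F i) \<and> monotone_game (F i) \<and> game_le (f i) (F i) \<and> game_le (F i) (f i) \<and> game_lf (F i) (F i)"
  and r0: "r0 \<in> R" and r0G: "game_le (f r0) G"
  shows "\<exists>S T. goodST G S T"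
proof -
  have wff: "\<And>i. i \<in> L \<union> R \<Longrightarrow> wf_game (f i)" using wfG Gdef by auto
  have wfF: "\<And>i. i \<in> L \<union> R \<Longrightarrow> wf_game (F i)" and mF: "\<And>i. i \<in> L \<union> R \<Longrightarrow> monotone_game (F i)"
    and fF: "\<And>i. i \<in> L \<union> R \<Longrightarrow> game_le (f i) (F i)" and Ff: "\<And>i. i \<in> L \<union> R \<Longrightarrow> game_le (F i) (f i)"
    and FF: "\<And>i. i \<in> L \<union> R \<Longrightarrow> game_lf (F i) (F i)" using hF by blast+
  have lfG: "\<And>l. l \<in> L \<Longrightarrow> game_lf (f l) G" using le_refl[of G] unfolding le_iff Gdef by auto
  have Glf: "\<And>r. r \<in> R \<Longrightarrow> game_lf G (f r)" using le_refl[of G] unfolding le_iff Gdef by auto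
  have naG: "\<not> is_atom G" using Gdef by simp
  have LR: "L \<noteq> {}" "R \<noteq> {}" using wfG Gdef by auto
  define R0 where "R0 = F r0"
  have r0': "r0 \<in> L \<union> R" using r0 by simp
  have wfR0: "wf_game R0" and mR0: "monotone_game R0" and R0R0: "game_lf R0 R0"
    using wfF[OF r0'] mF[OF r0'] FF[OF r0'] unfolding R0_def by auto
  have R0G: "game_le R0 G" unfolding R0_def using le_trans'[OF Ff[OF r0'] r0G] .
  have GF: "\<And>r. r \<in> R \<Longrightarrow> game_lf G (F r)" using Glf fF lf_le_trans by blast
  have FG: "\<And>l. l \<in> L \<Longrightarrow> game_lf (F l) G" using lfG Ff le_lf_trans by blast
  define T where "T = mkR (Atom top) R0 (\<lambda>r. Down (Up (F r))) R"
  have wfT: "wf_game T" unfolding T_def using wfR0 wfF by auto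
  have R0T: "game_le R0 T" unfolding le_iff
  proof (intro conjI ballI impI)
    fix GL assume "GL \<in> lopts R0" then show "game_lf GL T"
      using wf_opts[OF wfR0] by (intro lf_top_opt) (auto simp: T_def)
  next
    fix HR assume "HR \<in> ropts T"
    then consider "HR = R0" | r where "r \<in> R" "HR = Down (Up (F r))" unfolding T_def by auto
    then show "game_lf R0 HR"
    proof cases
      case 1 then show ?thesis using R0R0 by simp
    next
      case 2
      have "game_lf R0 (F r)" using lf_le_trans[OF le_lf_trans[OF R0G Glf[OF 2(1)]] fF] 2(1) by blast
      then show ?thesis using 2 wfR0 by (auto intro!: down_lf upI)
    qed
  next
    assume "is_atom R0 \<or> is_atom T" then show "game_lf R0 T"
      using wfR0 by (intro lf_top_opt) (auto simp: T_def)
  qed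
  have mT: "monotone_game T"
  proof (rule mono_intro; intro ballI)
    fix Y assume "Y \<in> lopts T" then show "game_le T Y \<and> monotone_game Y"
      using top_le[OF wfT] by (auto simp: T_def)
  next
    fix Y assume "Y \<in> ropts T"
    then consider "Y = R0" | r where "r \<in> R" "Y = Down (Up (F r))" unfolding T_def by auto
    then show "game_le Y T \<and> monotone_game Y"
    proof cases
      case 1 then show ?thesis using R0T mR0 by simp
    next
      case 2
      have r: "r \<in> L \<union> R" using 2 by simp
      have "game_le Y T" unfolding 2(2)
        by (rule downI[OF wfT], rule lf_top_opt) (auto simp: T_def wfF[OF r])
      moreover have "monotone_game Y" unfolding 2(2)
        by (rule mono_down) (auto intro: mono_up up_self wfF[OF r] mF[OF r] FF[OF r])
      ultimately show ?thesis by simp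
    qed
  qed
  have GT: "game_le G T" unfolding le_iff
  proof (intro conjI ballI impI)
    fix GL assume "GL \<in> lopts G" then show "game_lf GL T"
      using wf_opts[OF wfG] by (intro lf_top_opt) (auto simp: T_def)
  next
    fix HR assume "HR \<in> ropts T"
    then consider "HR = R0" | r where "r \<in> R" "HR = Down (Up (F r))" unfolding T_def by auto
    then show "game_lf G HR"
    proof cases
      case 1 then show ?thesis using GF[OF r0] by (simp add: R0_def)
    next
      case 2 then show ?thesis using GF[OF 2(1)] wfG by (auto intro!: down_lf upI)
    qed
  next
    assume "is_atom G \<or> is_atom T" then show "game_lf G T" using naG by (simp add: T_def)
  qed
  have TG: "game_lf T G" by (rule lf_right[of R0]) (simp_all add: T_def R0G)
  have Tfr: "\<forall>GR\<in>ropts G. game_lf T GR"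
  proof
    fix GR assume "GR \<in> ropts G"
    then obtain r where r: "r \<in> R" "GR = f r" using Gdef by auto
    then have r': "r \<in> L \<union> R" by simp
    show "game_lf T GR" unfolding r(2)
      by (rule lf_right[of "Down (Up (F r))"]) (use r in \<open>auto simp: T_def intro!: downI up_lf wff Ff\<close>)
  qed
  define Z where "Z = mkL (Up R0) (\<lambda>l. Up (Down (F l))) L (Atom bot)"
  have wfZ: "wf_game Z" unfolding Z_def using wfR0 wfF by auto
  have mZ: "monotone_game Z"
  proof (rule mono_intro; intro ballI)
    fix Y assume "Y \<in> lopts Z"
    then consider "Y = Up R0" | l where "l \<in> L" "Y = Up (Down (F l))" unfolding Z_def by auto
    then show "game_le Z Y \<and> monotone_game Y"
    proof cases
      case 1
      have "game_le Z Y" unfolding 1 by (rule upI[OF wfZ], rule lf_bot_opt) (simp_all add: Z_def wfR0)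
      then show ?thesis using mono_up[OF wfR0 mR0 R0R0] 1 by simp
    next
      case 2
      have l: "l \<in> L \<union> R" using 2 by simp
      have "game_le Z Y" unfolding 2(2) by (rule upI[OF wfZ], rule lf_bot_opt) (simp_all add: Z_def wfF[OF l])
      moreover have "monotone_game Y" unfolding 2(2)
        by (rule mono_up) (auto intro: mono_down down_self wfF[OF l] mF[OF l] FF[OF l])
      ultimately show ?thesis by simp
    qed
  next
    fix Y assume "Y \<in> ropts Z" then show "game_le Y Z \<and> monotone_game Y"
      using bot_le[OF wfZ] by (auto simp: Z_def)
  qed
  have ZG: "game_le Z G" unfolding le_iff
  proof (intro conjI ballI impI)
    fix GL assume "GL \<in> lopts Z"
    then consider "GL = Up R0" | l where "l \<in> L" "GL = Up (Down (F l))" unfolding Z_def by auto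
    then show "game_lf GL G"
    proof cases
      case 1 then show ?thesis using up_lf[OF R0G] by simp
    next
      case 2 then show ?thesis using FG[OF 2(1)] wfG by (auto intro!: up_lf downI)
    qed
  next
    fix HR assume "HR \<in> ropts G" then show "game_lf Z HR"
      using wf_opts[OF wfG] by (intro lf_bot_opt) (auto simp: Z_def)
  next
    assume "is_atom Z \<or> is_atom G" then show "game_lf Z G" using naG by (simp add: Z_def)
  qed
  have flZ: "\<And>l. l \<in> L \<Longrightarrow> game_lf (f l) Z"
  proof -
    fix l assume l: "l \<in> L"
    then have l': "l \<in> L \<union> R" by simp
    show "game_lf (f l) Z"
      by (rule lf_left[of "Up (Down (F l))"]) (use l in \<open>auto simp: Z_def intro!: upI down_lf wff[OF l'] fF[OF l']\<close>)
  qed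
  have R0Z: "game_lf R0 Z"
    by (rule lf_left[of "Up R0"]) (auto simp: Z_def intro!: upI wfR0 R0R0)
  define S where "S = quad (Up Z) (Up R0) (Down R0) (Down T)"
  have wfS: "wf_game S" unfolding S_def using wfZ wfR0 wfT by simp
  have R0S: "game_le R0 S" unfolding le_iff
  proof (intro conjI ballI impI)
    fix GL assume a: "GL \<in> lopts R0"
    have "game_lf GL R0" using le_refl[of R0] a unfolding le_iff by blast
    then show "game_lf GL S" using wf_opts[OF wfR0] a
      by (intro lf_left[of "Up R0"]) (auto simp: S_def intro!: upI)
  next
    fix HR assume "HR \<in> ropts S" then show "game_lf R0 HR"
      using le_refl[of R0] R0T by (auto simp: S_def intro!: down_lf)
  next
    assume "is_atom R0 \<or> is_atom S" then show "game_lf R0 S"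
      by (intro lf_left[of "Up R0"]) (auto simp: S_def intro!: upI wfR0 R0R0)
  qed
  have mS: "monotone_game S"
  proof (rule mono_intro; intro ballI)
    fix Y assume "Y \<in> lopts S"
    then consider "Y = Up Z" | "Y = Up R0" unfolding S_def by auto
    then show "game_le S Y \<and> monotone_game Y"
    proof cases
      case 1
      have "game_lf S Z" by (rule lf_right[of "Down R0"]) (auto simp: S_def intro!: downI wfZ R0Z)
      moreover have "game_lf Z Z" by (rule lf_bot_opt[OF wfZ]) (simp add: Z_def)
      ultimately show ?thesis unfolding 1 using upI[OF wfS] mono_up[OF wfZ mZ] by auto
    next
      case 2
      have "game_lf S R0" by (rule lf_right[of "Down R0"]) (auto simp: S_def intro!: downI wfR0 R0R0)
      then show ?thesis unfolding 2 using upI[OF wfS] mono_up[OF wfR0 mR0 R0R0] by auto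
    qed
  next
    fix Y assume "Y \<in> ropts S"
    then consider "Y = Down R0" | "Y = Down T" unfolding S_def by auto
    then show "game_le Y S \<and> monotone_game Y"
    proof cases
      case 1
      have "game_lf R0 S" by (rule lf_left[of "Up R0"]) (auto simp: S_def intro!: upI wfR0 R0R0)
      then show ?thesis unfolding 1 using downI[OF wfS] mono_down[OF wfR0 mR0 R0R0] by auto
    next
      case 2
      have "game_lf T S" by (rule lf_right[of R0]) (auto simp: T_def R0S)
      moreover have "game_lf T T" by (rule lf_top_opt[OF wfT]) (simp add: T_def)
      ultimately show ?thesis unfolding 2 using downI[OF wfS] mono_down[OF wfT mT] by auto
    qed
  qed
  have SG: "game_le S G" unfolding le_iff
  proof (intro conjI ballI impI)
    fix GL assume "GL \<in> lopts S" then show "game_lf GL G"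
      using up_lf[OF ZG] up_lf[OF R0G] by (auto simp: S_def)
  next
    fix HR assume a: "HR \<in> ropts G"
    show "game_lf S HR" by (rule lf_right[of "Down T"]) (use a Tfr wf_opts[OF wfG] in \<open>auto simp: S_def intro!: downI\<close>)
  next
    assume "is_atom S \<or> is_atom G" then show "game_lf S G" using naG by (simp add: S_def)
  qed
  have GS: "game_lf G S"
    by (rule lf_right[of "f r0"]) (use r0 Gdef le_trans'[OF fF[OF r0'] R0S[unfolded R0_def]] in \<open>auto simp: R0_def\<close>)
  have flS: "\<forall>GL\<in>lopts G. game_lf GL S"
  proof
    fix GL assume "GL \<in> lopts G"
    then obtain l where l: "l \<in> L" "GL = f l" using Gdef by auto
    show "game_lf GL S" unfolding l(2)
      by (rule lf_left[of "Up Z"]) (use l in \<open>auto simp: S_def intro!: upI flZ wff\<close>)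
  qed
  have "goodST G S T" unfolding goodST_def
    using wfS mS SG GS flS wfT mT GT TG Tfr by (intro conjI)
  then show ?thesis by blast
qed


lemma caseB:
  fixes f :: "'i \<Rightarrow> ('a::{order_bot,order_top},'i) game" and F :: "'i \<Rightarrow> ('a,'i) jgame"
  assumes Gdef: "G = Comp L R f" and wfG: "wf_game G"
  and hF: "\<And>i. i \<in> L \<union> R \<Longrightarrow> wf_game (F i) \<and> monotone_game (F i) \<and> game_le (f i) (F i) \<and> game_le (F i) (f i) \<and> game_lf (F i) (F i)"
  and l0: "l0 \<in> L" and Gl0: "game_le G (f l0)"
  shows "\<exists>S T. goodST G S T"
proof -
  have wff: "\<And>i. i \<in> L \<union> R \<Longrightarrow> wf_game (f i)" using wfG Gdef by auto
  have wfF: "\<And>i. i \<in> L \<union> R \<Longrightarrow> wf_game (F i)" and mF: "\<And>i. i \<in> L \<union> R \<Longrightarrow> monotone_game (F i)"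
    and fF: "\<And>i. i \<in> L \<union> R \<Longrightarrow> game_le (f i) (F i)" and Ff: "\<And>i. i \<in> L \<union> R \<Longrightarrow> game_le (F i) (f i)"
    and FF: "\<And>i. i \<in> L \<union> R \<Longrightarrow> game_lf (F i) (F i)" using hF by blast+
  have lfG: "\<And>l. l \<in> L \<Longrightarrow> game_lf (f l) G" using le_refl[of G] unfolding le_iff Gdef by auto
  have Glf: "\<And>r. r \<in> R \<Longrightarrow> game_lf G (f r)" using le_refl[of G] unfolding le_iff Gdef by auto
  have naG: "\<not> is_atom G" using Gdef by simp
  define L0 where "L0 = F l0"
  have l0': "l0 \<in> L \<union> R" using l0 by simp
  have wfL0: "wf_game L0" and mL0: "monotone_game L0" and L0L0: "game_lf L0 L0"
    using wfF[OF l0'] mF[OF l0'] FF[OF l0'] unfolding L0_def by auto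
  have GL0: "game_le G L0" unfolding L0_def using le_trans'[OF Gl0 fF[OF l0']] .
  have L0f: "game_le L0 (f l0)" unfolding L0_def using Ff[OF l0'] .
  have GF: "\<And>r. r \<in> R \<Longrightarrow> game_lf G (F r)" using Glf fF lf_le_trans by blast
  have FG: "\<And>l. l \<in> L \<Longrightarrow> game_lf (F l) G" using lfG Ff le_lf_trans by blast
  define S where "S = mkL L0 (\<lambda>l. Up (Down (F l))) L (Atom bot)"
  have wfS: "wf_game S" unfolding S_def using wfL0 wfF by auto
  have SG: "game_le S G" unfolding le_iff
  proof (intro conjI ballI impI)
    fix GL assume "GL \<in> lopts S"
    then consider "GL = L0" | l where "l \<in> L" "GL = Up (Down (F l))" unfolding S_def by auto
    then show "game_lf GL G"
    proof cases
      case 1 show ?thesis unfolding 1 by (rule lf_left[of "f l0"]) (use l0 Gdef L0f in auto)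
    next
      case 2 then show ?thesis using FG[OF 2(1)] wfG by (auto intro!: up_lf downI)
    qed
  next
    fix HR assume "HR \<in> ropts G" then show "game_lf S HR"
      using wf_opts[OF wfG] by (intro lf_bot_opt) (auto simp: S_def)
  next
    assume "is_atom S \<or> is_atom G" then show "game_lf S G" using naG by (simp add: S_def)
  qed
  have GS: "game_lf G S" by (rule lf_left[of L0]) (simp_all add: S_def GL0)
  have flS: "\<And>l. l \<in> L \<Longrightarrow> game_lf (f l) S"
  proof -
    fix l assume l: "l \<in> L"
    then have l': "l \<in> L \<union> R" by simp
    show "game_lf (f l) S"
      by (rule lf_left[of "Up (Down (F l))"]) (use l in \<open>auto simp: S_def intro!: upI down_lf wff[OF l'] fF[OF l']\<close>)
  qed
  have SL0: "game_le S L0" unfolding le_iff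
  proof (intro conjI ballI impI)
    fix GL assume "GL \<in> lopts S"
    then consider "GL = L0" | l where "l \<in> L" "GL = Up (Down (F l))" unfolding S_def by auto
    then show "game_lf GL L0"
    proof cases
      case 1 then show ?thesis using L0L0 by simp
    next
      case 2
      have "game_lf (F l) L0" using lf_le_trans[OF FG[OF 2(1)] GL0] .
      then show ?thesis using 2 wfL0 by (auto intro!: up_lf downI)
    qed
  next
    fix HR assume "HR \<in> ropts L0" then show "game_lf S HR"
      using wf_opts[OF wfL0] by (intro lf_bot_opt) (auto simp: S_def)
  next
    assume "is_atom S \<or> is_atom L0" then show "game_lf S L0"
      using wfL0 by (intro lf_bot_opt) (auto simp: S_def)
  qed
  have mS: "monotone_game S"
  proof (rule mono_intro; intro ballI)
    fix Y assume "Y \<in> lopts S"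
    then consider "Y = L0" | l where "l \<in> L" "Y = Up (Down (F l))" unfolding S_def by auto
    then show "game_le S Y \<and> monotone_game Y"
    proof cases
      case 1 then show ?thesis using SL0 mL0 by simp
    next
      case 2
      have l: "l \<in> L \<union> R" using 2 by simp
      have "game_le S Y" unfolding 2(2) by (rule upI[OF wfS], rule lf_bot_opt) (simp_all add: S_def wfF[OF l])
      moreover have "monotone_game Y" unfolding 2(2)
        by (rule mono_up) (auto intro: mono_down down_self wfF[OF l] mF[OF l] FF[OF l])
      ultimately show ?thesis by simp
    qed
  next
    fix Y assume "Y \<in> ropts S" then show "game_le Y S \<and> monotone_game Y"
      using bot_le[OF wfS] by (auto simp: S_def)
  qed
  define Zd where "Zd = mkR (Atom top) (Down L0) (\<lambda>r. Down (Up (F r))) R"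
  have wfZd: "wf_game Zd" unfolding Zd_def using wfL0 wfF by auto
  have mZd: "monotone_game Zd"
  proof (rule mono_intro; intro ballI)
    fix Y assume "Y \<in> lopts Zd" then show "game_le Zd Y \<and> monotone_game Y"
      using top_le[OF wfZd] by (auto simp: Zd_def)
  next
    fix Y assume "Y \<in> ropts Zd"
    then consider "Y = Down L0" | r where "r \<in> R" "Y = Down (Up (F r))" unfolding Zd_def by auto
    then show "game_le Y Zd \<and> monotone_game Y"
    proof cases
      case 1
      have "game_le Y Zd" unfolding 1 by (rule downI[OF wfZd], rule lf_top_opt) (simp_all add: Zd_def wfL0)
      then show ?thesis using mono_down[OF wfL0 mL0 L0L0] 1 by simp
    next
      case 2
      have r: "r \<in> L \<union> R" using 2 by simp
      have "game_le Y Zd" unfolding 2(2)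
        by (rule downI[OF wfZd], rule lf_top_opt) (auto simp: Zd_def wfF[OF r])
      moreover have "monotone_game Y" unfolding 2(2)
        by (rule mono_down) (auto intro: mono_up up_self wfF[OF r] mF[OF r] FF[OF r])
      ultimately show ?thesis by simp
    qed
  qed
  have GZd: "game_le G Zd" unfolding le_iff
  proof (intro conjI ballI impI)
    fix GL assume "GL \<in> lopts G" then show "game_lf GL Zd"
      using wf_opts[OF wfG] by (intro lf_top_opt) (auto simp: Zd_def)
  next
    fix HR assume "HR \<in> ropts Zd"
    then consider "HR = Down L0" | r where "r \<in> R" "HR = Down (Up (F r))" unfolding Zd_def by auto
    then show "game_lf G HR"
    proof cases
      case 1 then show ?thesis using down_lf[OF GL0] by simp
    next
      case 2 then show ?thesis using GF[OF 2(1)] wfG by (auto intro!: down_lf upI)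
    qed
  next
    assume "is_atom G \<or> is_atom Zd" then show "game_lf G Zd" using naG by (simp add: Zd_def)
  qed
  have Zdfr: "\<And>r. r \<in> R \<Longrightarrow> game_lf Zd (f r)"
  proof -
    fix r assume r: "r \<in> R"
    then have r': "r \<in> L \<union> R" by simp
    show "game_lf Zd (f r)"
      by (rule lf_right[of "Down (Up (F r))"]) (use r in \<open>auto simp: Zd_def intro!: downI up_lf wff[OF r'] Ff[OF r']\<close>)
  qed
  have ZdL0: "game_lf Zd L0"
    by (rule lf_right[of "Down L0"]) (auto simp: Zd_def intro!: downI wfL0 L0L0)
  define T where "T = quad (Up L0) (Up S) (Down Zd) (Down L0)"
  have wfT: "wf_game T" unfolding T_def using wfS wfL0 wfZd by simp
  have DL0L0: "game_le (Down L0) L0" by (rule downI[OF wfL0 L0L0])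
  have TL0: "game_le T L0" unfolding le_iff
  proof (intro conjI ballI impI)
    fix GL assume "GL \<in> lopts T" then show "game_lf GL L0"
      using up_lf[OF le_refl[of L0]] up_lf[OF SL0] by (auto simp: T_def)
  next
    fix HR assume a: "HR \<in> ropts L0"
    have "game_lf L0 HR" using le_refl[of L0] a unfolding le_iff by blast
    then show "game_lf T HR" using wf_opts[OF wfL0] a
      by (intro lf_right[of "Down L0"]) (auto simp: T_def intro!: downI)
  next
    assume "is_atom T \<or> is_atom L0" then show "game_lf T L0"
      by (intro lf_right[of "Down L0"]) (auto simp: T_def DL0L0)
  qed
  have mT: "monotone_game T"
  proof (rule mono_intro; intro ballI)
    fix Y assume "Y \<in> lopts T"
    then consider "Y = Up L0" | "Y = Up S" unfolding T_def by auto
    then show "game_le T Y \<and> monotone_game Y"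
    proof cases
      case 1
      have "game_lf T L0" by (rule lf_right[of "Down L0"]) (auto simp: T_def DL0L0)
      then show ?thesis unfolding 1 using upI[OF wfT] mono_up[OF wfL0 mL0 L0L0] by auto
    next
      case 2
      have "game_lf T S" by (rule lf_left[of L0]) (auto simp: S_def TL0)
      moreover have "game_lf S S" by (rule lf_bot_opt[OF wfS]) (simp add: S_def)
      ultimately show ?thesis unfolding 2 using upI[OF wfT] mono_up[OF wfS mS] by auto
    qed
  next
    fix Y assume "Y \<in> ropts T"
    then consider "Y = Down Zd" | "Y = Down L0" unfolding T_def by auto
    then show "game_le Y T \<and> monotone_game Y"
    proof cases
      case 1
      have "game_lf Zd T" by (rule lf_left[of "Up L0"]) (auto simp: T_def intro!: upI wfZd ZdL0)
      moreover have "game_lf Zd Zd" by (rule lf_top_opt[OF wfZd]) (simp add: Zd_def)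
      ultimately show ?thesis unfolding 1 using downI[OF wfT] mono_down[OF wfZd mZd] by auto
    next
      case 2
      have "game_lf L0 T" by (rule lf_left[of "Up L0"]) (auto simp: T_def intro!: upI wfL0 L0L0)
      then show ?thesis unfolding 2 using downI[OF wfT] mono_down[OF wfL0 mL0 L0L0] by auto
    qed
  qed
  have GT: "game_le G T" unfolding le_iff
  proof (intro conjI ballI impI)
    fix GL assume "GL \<in> lopts G"
    then obtain l where l: "l \<in> L" "GL = f l" using Gdef by auto
    show "game_lf GL T" unfolding l(2)
      by (rule lf_left[of "Up S"]) (use l in \<open>auto simp: T_def intro!: upI flS wff\<close>)
  next
    fix HR assume "HR \<in> ropts T" then show "game_lf G HR"
      using down_lf[OF GZd] down_lf[OF GL0] by (auto simp: T_def)
  next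
    assume "is_atom G \<or> is_atom T" then show "game_lf G T" using naG by (simp add: T_def)
  qed
  have TG: "game_lf T G"
    by (rule lf_left[of "f l0"]) (use l0 Gdef le_trans'[OF TL0 L0f] in auto)
  have Tfr: "\<forall>GR\<in>ropts G. game_lf T GR"
  proof
    fix GR assume "GR \<in> ropts G"
    then obtain r where r: "r \<in> R" "GR = f r" using Gdef by auto
    then have r': "r \<in> L \<union> R" by simp
    show "game_lf T GR" unfolding r(2)
      by (rule lf_right[of "Down Zd"]) (use r in \<open>auto simp: T_def intro!: downI Zdfr wff[OF r']\<close>)
  qed
  have flS': "\<forall>GL\<in>lopts G. game_lf GL S" using flS Gdef by auto
  have "goodST G S T" unfolding goodST_def
    using wfS mS SG GS flS' wfT mT GT TG Tfr by (intro conjI)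
  then show ?thesis by blast
qed

theorem main_aux:
  fixes G :: "('a::{order_bot, order_top}, 'i) game"
  shows "wf_game G \<Longrightarrow> passable G \<Longrightarrow> \<exists>H :: ('a, ('a, 'i) game set) game. wf_game H \<and> monotone_game H \<and> game_equiv G H"
proof (induction G)
  case (Atom a)
  show ?case
    by (rule exI[of _ "Atom a"]) (simp add: game_equiv_def le_atom)
next
  case (Comp L R f)
  let ?G = "Comp L R f"
  have ex: "\<exists>H :: ('a,'i) jgame. wf_game H \<and> monotone_game H \<and> game_equiv (f i) H" if i: "i \<in> L \<union> R" for i
  proof -
    have w: "wf_game (f i)" using Comp.prems(1) i by auto
    have p: "passable (f i)" using Comp.prems(2) i by auto
    show ?thesis by (rule Comp.IH[OF rangeI w p])
  qed
  then have "\<forall>i\<in>L \<union> R. \<exists>H :: ('a,'i) jgame. wf_game H \<and> monotone_game H \<and> game_equiv (f i) H"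
    by blast
  from bchoice[OF this] obtain F :: "'i \<Rightarrow> ('a,'i) jgame" where hF0: "\<forall>i\<in>L \<union> R. wf_game (F i) \<and> monotone_game (F i) \<and> game_equiv (f i) (F i)"
    by blast
  have hF: "wf_game (F i) \<and> monotone_game (F i) \<and> game_le (f i) (F i) \<and> game_le (F i) (f i) \<and> game_lf (F i) (F i)"
    if i: "i \<in> L \<union> R" for i
  proof -
    have p: "game_lf (f i) (f i)" using Comp.prems(2) i by (auto intro: passable_lf)
    have a: "wf_game (F i)" "monotone_game (F i)" "game_le (f i) (F i)" "game_le (F i) (f i)"
      using hF0 i unfolding game_equiv_def by blast+
    have "game_lf (F i) (F i)" using lf_le_trans[OF le_lf_trans[OF a(4) p] a(3)] .
    with a show ?thesis by blast
  qed
  have "game_lf ?G ?G" using Comp.prems(2) by simp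
  then have "(\<exists>r0\<in>R. game_le (f r0) ?G) \<or> (\<exists>l0\<in>L. game_le ?G (f l0))"
    unfolding lf_iff by simp
  then have "\<exists>S T. goodST ?G S T"
  proof
    assume "\<exists>r0\<in>R. game_le (f r0) ?G"
    then obtain r0 where "r0 \<in> R" "game_le (f r0) ?G" by blast
    then show ?thesis using caseA[OF refl Comp.prems(1) hF] by blast
  next
    assume "\<exists>l0\<in>L. game_le ?G (f l0)"
    then obtain l0 where "l0 \<in> L" "game_le ?G (f l0)" by blast
    then show ?thesis using caseB[OF refl Comp.prems(1) hF] by blast
  qed
  then obtain S T where g: "goodST ?G S T" by blast
  have gg: "wf_game S" "monotone_game S" "game_le S ?G" "game_lf ?G S" "\<forall>GL\<in>lopts ?G. game_lf GL S"
    "wf_game T" "monotone_game T" "game_le ?G T" "game_lf T ?G" "\<forall>GR\<in>ropts ?G. game_lf T GR"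
    using g unfolding goodST_def by blast+
  have na: "\<not> is_atom ?G" by simp
  show ?case by (rule build[OF Comp.prems(1) na gg])
qed

theorem theorem6p5:
  fixes G :: "('a::{order_bot, order_top}, 'i) game"
  assumes "wf_game G" and "passable G"
  shows "\<exists>H :: ('a, ('a, 'i) game set) game. wf_game H \<and> monotone_game H \<and> game_equiv G H"
  by (rule main_aux[OF assms])

end
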